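(* Let $T$ be a tree, $T'$ a subtree of $T$, and let $D$ be a partial decision tree for $T$ which contains no query to a vertex of $T'$ but contains at least one query to a vertex of $N_T(V(T'))$. Let $Q$ be the set of all queries in $D$ to vertices of $N_T(V(T'))$. Then $D\langle Q\rangle$ is a path in $D$.
   Context: A query to a vertex $v$ of $T$ (with hidden target $x$) returns either that $v=x$ or the connected component of $T-v$ containing $x$. A decision tree for $T$ is defined recursively: a rooted tree whose root is a vertex $v$ of $T$ and whose root subtrees are decision trees for the connected components of $T-v$, one per component. A partial decision tree for $T$ is a subtree of some decision tree $D$ for $T$ that contains the root of $D$. $N_T(S)$ denotes the set of vertices outside $S$ adjacent to some vertex of $S$. For a rooted tree $D$ and a vertex set $Q$, $D\langle Q\rangle$ is the minimal connected subtree of $D$ containing $Q$. *)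

theory Defs
  imports Main
begin

text \<open>Graphs: a vertex set V and a symmetric edge relation E (set of ordered pairs).\<close>

definition connected_on :: "('a \<times> 'a) set \<Rightarrow> 'a set \<Rightarrow> bool" where
  "connected_on E S \<longleftrightarrow> (\<forall>x\<in>S. \<forall>y\<in>S. (x, y) \<in> (E \<inter> S \<times> S)\<^sup>*)"

definition has_cycle :: "('a \<times> 'a) set \<Rightarrow> bool" where
  "has_cycle E \<longleftrightarrow> (\<exists>xs. length xs \<ge> 3 \<and> distinct xs \<and>
      (\<forall>i < length xs. (xs ! i, xs ! ((i + 1) mod length xs)) \<in> E))"

definition is_tree :: "'a set \<Rightarrow> ('a \<times> 'a) set \<Rightarrow> bool" where
  "is_tree V E \<longleftrightarrow> finite V \<and> V \<noteq> {} \<and> E \<subseteq> V \<times> V \<and> sym E \<and> (\<forall>x. (x, x) \<notin> E)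
     \<and> connected_on E V \<and> \<not> has_cycle E"

definition is_subtree_vset :: "'a set \<Rightarrow> ('a \<times> 'a) set \<Rightarrow> 'a set \<Rightarrow> bool" where
  "is_subtree_vset V E U \<longleftrightarrow> U \<subseteq> V \<and> U \<noteq> {} \<and> connected_on E U"

definition nbhd :: "'a set \<Rightarrow> ('a \<times> 'a) set \<Rightarrow> 'a set \<Rightarrow> 'a set" where
  "nbhd V E S = {y \<in> V - S. \<exists>x\<in>S. (x, y) \<in> E}"

definition comps_minus :: "('a \<times> 'a) set \<Rightarrow> 'a set \<Rightarrow> 'a \<Rightarrow> 'a set set" where
  "comps_minus E S v = (\<lambda>x. {y \<in> S - {v}. (x, y) \<in> (E \<inter> (S - {v}) \<times> (S - {v}))\<^sup>*}) ` (S - {v})"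

datatype 'a rtree = Node 'a "'a rtree list"

fun root :: "'a rtree \<Rightarrow> 'a" where
  "root (Node v ts) = v"

fun rlabels :: "'a rtree \<Rightarrow> 'a set" where
  "rlabels (Node v ts) = insert v (\<Union> (set (map rlabels ts)))"

fun dedges :: "'a rtree \<Rightarrow> ('a \<times> 'a) set" where
  "dedges (Node v ts) = {(v, root t) | t. t \<in> set ts} \<union> \<Union> (set (map dedges ts))"

definition uedges :: "'a rtree \<Rightarrow> ('a \<times> 'a) set" where
  "uedges D = dedges D \<union> (dedges D)\<inverse>"

inductive is_dtree :: "('a \<times> 'a) set \<Rightarrow> 'a set \<Rightarrow> 'a rtree \<Rightarrow> bool" for E where
  "v \<in> S \<Longrightarrow> distinct Cs \<Longrightarrow> set Cs = comps_minus E S v \<Longrightarrow> list_all2 (is_dtree E) Cs ts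
    \<Longrightarrow> is_dtree E S (Node v ts)"

text \<open>A partial decision tree, given as the node set P of a subtree of D containing
  the root (nodes of a decision tree are identified with their labels, which are
  pairwise distinct): P contains the root and is closed under taking parents.\<close>
definition is_partial_dtree_of :: "'a rtree \<Rightarrow> 'a set \<Rightarrow> bool" where
  "is_partial_dtree_of D P \<longleftrightarrow> P \<subseteq> rlabels D \<and> root D \<in> P \<and>
     (\<forall>a b. (a, b) \<in> dedges D \<longrightarrow> b \<in> P \<longrightarrow> a \<in> P)"

definition dspan :: "'a rtree \<Rightarrow> 'a set \<Rightarrow> 'a set" where
  "dspan D Q = \<Inter> {X. Q \<subseteq> X \<and> X \<subseteq> rlabels D \<and> connected_on (uedges D) X}"

definition is_path_on :: "('a \<times> 'a) set \<Rightarrow> 'a set \<Rightarrow> bool" where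
  "is_path_on E X \<longleftrightarrow> (\<exists>xs. distinct xs \<and> set xs = X \<and>
      (\<forall>i. i + 1 < length xs \<longrightarrow> (xs ! i, xs ! (i + 1)) \<in> E))"

end

theory Submission
  imports Defs
begin


lemma anc_comparable:
  assumes up: "\<And>a a' b. (a,b)\<in>r \<Longrightarrow> (a',b)\<in>r \<Longrightarrow> a=a'"
  shows "(x,b)\<in>r\<^sup>* \<Longrightarrow> (y,b)\<in>r\<^sup>* \<Longrightarrow> (x,y)\<in>r\<^sup>* \<or> (y,x)\<in>r\<^sup>*"
proof (induction b arbitrary: y rule: rtrancl_induct)
  case base
  then show ?case by simp
next
  case (step b c)
  show ?case
  proof (cases "y = c")
    case True
    then show ?thesis using step by (meson rtrancl.rtrancl_into_rtrancl)
  next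
    case False
    then have "(y,c) \<in> r\<^sup>+" using step(4) by (meson rtranclD)
    then obtain p where "(y,p)\<in>r\<^sup>*" "(p,c)\<in>r" by (meson tranclD2)
    then have "p = b" using up step(2) by blast
    then show ?thesis using step.IH \<open>(y,p)\<in>r\<^sup>*\<close> by blast
  qed
qed

lemma path_exists:
  assumes up: "\<And>a a' b. (a,b)\<in>r \<Longrightarrow> (a',b)\<in>r \<Longrightarrow> a=a'"
    and acyc: "\<And>x. (x,x) \<notin> r\<^sup>+"
  shows "(a,b)\<in>r\<^sup>* \<Longrightarrow> \<exists>xs. xs \<noteq> [] \<and> last xs = b \<and> distinct xs \<and>
     set xs = {z. (a,z)\<in>r\<^sup>* \<and> (z,b)\<in>r\<^sup>*} \<and> (\<forall>i. i+1 < length xs \<longrightarrow> (xs!i, xs!(i+1)) \<in> r)"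
proof (induction b rule: rtrancl_induct)
  case base
  have "{z. (a,z)\<in>r\<^sup>* \<and> (z,a)\<in>r\<^sup>*} = {a}"
  proof safe
    fix z assume "(a,z)\<in>r\<^sup>*" "(z,a)\<in>r\<^sup>*"
    then show "z = a" using acyc by (metis rtrancl_eq_or_trancl rtrancl_trancl_trancl)
  qed
  then show ?case by (intro exI[of _ "[a]"]) auto
next
  case (step b c)
  then obtain xs where xs: "xs \<noteq> []" "last xs = b" "distinct xs"
     "set xs = {z. (a,z)\<in>r\<^sup>* \<and> (z,b)\<in>r\<^sup>*}" "\<forall>i. i+1 < length xs \<longrightarrow> (xs!i, xs!(i+1)) \<in> r"
    by blast
  have cn: "c \<notin> set xs"
  proof
    assume "c \<in> set xs"
    then have "(c,b)\<in>r\<^sup>*" using xs by auto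
    then have "(c,c) \<in> r\<^sup>+" using step(2) by auto
    then show False using acyc by blast
  qed
  have st: "set (xs@[c]) = {z. (a,z)\<in>r\<^sup>* \<and> (z,c)\<in>r\<^sup>*}"
  proof safe
    fix z assume "z \<in> set (xs@[c])"
    then show "(a,z)\<in>r\<^sup>*" "(z,c)\<in>r\<^sup>*" using xs step by auto
  next
    fix z assume z: "(a,z)\<in>r\<^sup>*" "(z,c)\<in>r\<^sup>*"
    show "z \<in> set (xs@[c])"
    proof (cases "z = c")
      case False
      then have "(z,c)\<in>r\<^sup>+" using z by (meson rtranclD)
      then obtain p where "(z,p)\<in>r\<^sup>*" "(p,c)\<in>r" by (meson tranclD2)
      then have "p = b" using up step(2) by blast
      then show ?thesis using xs z \<open>(z,p)\<in>r\<^sup>*\<close> by auto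
    qed simp
  qed
  have ed: "\<forall>i. i+1 < length (xs@[c]) \<longrightarrow> ((xs@[c])!i, (xs@[c])!(i+1)) \<in> r"
  proof (intro allI impI)
    fix i assume i: "i+1 < length (xs@[c])"
    show "((xs@[c])!i, (xs@[c])!(i+1)) \<in> r"
    proof (cases "i+1 < length xs")
      case True
      then show ?thesis using xs(5) by (simp add: nth_append)
    next
      case False
      then have "i + 1 = length xs" using i by simp
      then have "xs ! i = b" using xs(1,2) by (metis add_diff_cancel_right' last_conv_nth)
      then show ?thesis using \<open>i + 1 = length xs\<close> step(2) by (simp add: nth_append)
    qed
  qed
  show ?case using xs cn st ed by (intro exI[of _ "xs@[c]"]) auto
qed

lemma seg_conn:
  "(x,y)\<in>r\<^sup>* \<Longrightarrow> (a,x)\<in>r\<^sup>* \<Longrightarrow> (y,b)\<in>r\<^sup>* \<Longrightarrow>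
    (x,y) \<in> (r \<inter> {z. (a,z)\<in>r\<^sup>* \<and> (z,b)\<in>r\<^sup>*} \<times> {z. (a,z)\<in>r\<^sup>* \<and> (z,b)\<in>r\<^sup>*})\<^sup>*"
proof (induction y rule: rtrancl_induct)
  case base
  then show ?case by simp
next
  case (step y z)
  have "(y,b)\<in>r\<^sup>*" using step by auto
  then have IH: "(x,y) \<in> (r \<inter> {z. (a,z)\<in>r\<^sup>* \<and> (z,b)\<in>r\<^sup>*} \<times> {z. (a,z)\<in>r\<^sup>* \<and> (z,b)\<in>r\<^sup>*})\<^sup>*"
    using step by blast
  have "(y,z) \<in> r \<inter> {z. (a,z)\<in>r\<^sup>* \<and> (z,b)\<in>r\<^sup>*} \<times> {z. (a,z)\<in>r\<^sup>* \<and> (z,b)\<in>r\<^sup>*}"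
    using step \<open>(y,b)\<in>r\<^sup>*\<close> by (auto intro: rtrancl_trans)
  then show ?case using IH by (meson rtrancl.rtrancl_into_rtrancl)
qed

lemma cross_edge:
  "(p,q) \<in> R\<^sup>* \<Longrightarrow> p \<in> S \<Longrightarrow> q \<notin> S \<Longrightarrow> \<exists>x y. (x,y)\<in>R \<and> x\<in>S \<and> y \<notin> S"
  by (induction q rule: rtrancl_induct) auto



fun wft :: "'a rtree \<Rightarrow> bool" where
  "wft (Node v ts) = ((\<forall>t\<in>set ts. v \<notin> rlabels t \<and> wft t) \<and>
     (\<forall>t\<in>set ts. \<forall>t'\<in>set ts. t \<noteq> t' \<longrightarrow> rlabels t \<inter> rlabels t' = {}))"

lemma root_in: "root t \<in> rlabels t"
  by (cases t) auto

lemma dedges_sub: "dedges t \<subseteq> rlabels t \<times> rlabels t"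
proof (induction t)
  case (Node v ts)
  then show ?case using root_in by fastforce
qed

lemma trancl_sub: "(x,y) \<in> (dedges t)\<^sup>+ \<Longrightarrow> x \<in> rlabels t \<and> y \<in> rlabels t"
  using trancl_subset_Sigma[OF dedges_sub] by blast

lemma root_anc: "x \<in> rlabels t \<Longrightarrow> (root t, x) \<in> (dedges t)\<^sup>*"
proof (induction t arbitrary: x)
  case (Node v ts)
  show ?case
  proof (cases "x = v")
    case False
    then obtain t where t: "t \<in> set ts" "x \<in> rlabels t" using Node.prems by auto
    then have "(root t, x) \<in> (dedges t)\<^sup>*" using Node.IH by blast
    moreover have "dedges t \<subseteq> dedges (Node v ts)" using t by auto
    ultimately have "(root t, x) \<in> (dedges (Node v ts))\<^sup>*" using rtrancl_mono by blast
    moreover have "(v, root t) \<in> dedges (Node v ts)" using t by auto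
    ultimately show ?thesis by (simp add: converse_rtrancl_into_rtrancl)
  qed simp
qed

lemma root_not_child: "wft t \<Longrightarrow> (a, root t) \<notin> dedges t"
proof (cases t)
  case (Node v ts)
  assume w: "wft t"
  show ?thesis
  proof
    assume "(a, root t) \<in> dedges t"
    then consider t' where "t' \<in> set ts" "v = root t'" | t' where "t' \<in> set ts" "(a,v) \<in> dedges t'"
      using Node by auto
    then show False
    proof cases
      case 1 then show ?thesis using w Node root_in by fastforce
    next
      case 2 then show ?thesis using w Node dedges_sub by fastforce
    qed
  qed
qed

lemma unique_parent: "wft t \<Longrightarrow> (a,b) \<in> dedges t \<Longrightarrow> (a',b) \<in> dedges t \<Longrightarrow> a = a'"
proof (induction t)
  case (Node v ts)
  from Node.prems(2) consider t where "t \<in> set ts" "a = v" "b = root t" | t where "t \<in> set ts" "(a,b) \<in> dedges t"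
    by auto
  then show ?case
  proof cases
    case 1
    note t1 = this
    from Node.prems(3) consider t' where "t' \<in> set ts" "a' = v" "b = root t'" | t' where "t' \<in> set ts" "(a',b) \<in> dedges t'"
      by auto
    then show ?thesis
    proof cases
      case 1 then show ?thesis using t1 by simp
    next
      case 2
      have "b \<in> rlabels t'" using 2 dedges_sub by blast
      moreover have "b \<in> rlabels t" using t1 root_in by metis
      ultimately have "t = t'" using Node.prems(1) t1 2 by auto
      then show ?thesis using 2 t1 root_not_child Node.prems(1) by fastforce
    qed
  next
    case 2
    note t1 = this
    from Node.prems(3) consider t' where "t' \<in> set ts" "a' = v" "b = root t'" | t' where "t' \<in> set ts" "(a',b) \<in> dedges t'"
      by auto
    then show ?thesis
    proof cases
      case 1
      have "b \<in> rlabels t" using t1 dedges_sub by blast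
      moreover have "b \<in> rlabels t'" using 1 root_in by metis
      ultimately have "t = t'" using Node.prems(1) t1 1 by auto
      then show ?thesis using 1 t1 root_not_child Node.prems(1) by fastforce
    next
      case 2
      have "b \<in> rlabels t" using t1 dedges_sub by blast
      moreover have "b \<in> rlabels t'" using 2 dedges_sub by blast
      ultimately have "t = t'" using Node.prems(1) t1 2 by auto
      then show ?thesis using 2 t1 Node.IH Node.prems(1) by auto
    qed
  qed
qed

lemma trancl_node:
  assumes w: "wft (Node v ts)"
  shows "(x,y) \<in> (dedges (Node v ts))\<^sup>+ \<Longrightarrow>
     (x = v \<and> (\<exists>t\<in>set ts. y \<in> rlabels t)) \<or> (\<exists>t\<in>set ts. (x,y) \<in> (dedges t)\<^sup>+)"
proof (induction y rule: trancl_induct)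
  case (base y)
  then show ?case using root_in by fastforce
next
  case (step y z)
  have yin: "\<exists>t\<in>set ts. y \<in> rlabels t"
    using step.IH
  proof
    assume "\<exists>t\<in>set ts. (x, y) \<in> (dedges t)\<^sup>+"
    then obtain t where "t \<in> set ts" "(x, y) \<in> (dedges t)\<^sup>+" by blast
    then show ?thesis using trancl_sub[of x y t] by blast
  qed blast
  from step(2) consider t where "t \<in> set ts" "y = v" "z = root t" | t where "t \<in> set ts" "(y,z) \<in> dedges t"
    by auto
  then show ?case
  proof cases
    case 1 then show ?thesis using yin w by auto
  next
    case 2
    note t2 = this
    from step.IH show ?thesis
    proof
      assume "x = v \<and> (\<exists>t\<in>set ts. y \<in> rlabels t)"
      then show ?thesis using t2 dedges_sub by blast
    next
      assume "\<exists>t\<in>set ts. (x, y) \<in> (dedges t)\<^sup>+"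
      then obtain t' where t': "t' \<in> set ts" "(x, y) \<in> (dedges t')\<^sup>+" by blast
      have "y \<in> rlabels t'" using trancl_sub[OF t'(2)] by blast
      moreover have "y \<in> rlabels t" using t2 dedges_sub by blast
      ultimately have "t = t'" using w t2 t' by auto
      then show ?thesis using t' t2 by (meson trancl.trancl_into_trancl)
    qed
  qed
qed

lemma acyclic_wft: "wft t \<Longrightarrow> (x,x) \<notin> (dedges t)\<^sup>+"
proof (induction t)
  case (Node v ts)
  show ?case
  proof
    assume "(x,x) \<in> (dedges (Node v ts))\<^sup>+"
    from trancl_node[OF Node.prems this] show False
      using Node by auto
  qed
qed

lemma rlabels_dtree: "is_dtree E S t \<Longrightarrow> rlabels t = S"
proof (induction rule: is_dtree.induct)
  case (1 v S Cs ts)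
  have "list_all2 (\<lambda>C t. rlabels t = C) Cs ts" using 1(4) by (simp add: list_all2_conv_all_nth)
  then have "map rlabels ts = Cs" by (induction rule: list_all2_induct) auto
  then have "\<Union> (set (map rlabels ts)) = \<Union> (comps_minus E S v)" using 1(3) by simp
  also have "\<dots> = S - {v}" unfolding comps_minus_def by auto
  finally show ?case using 1(1) by auto
qed

lemma dtree_wft: assumes symE: "sym E" shows "is_dtree E S t \<Longrightarrow> wft t"
proof (induction rule: is_dtree.induct)
  case (1 v S Cs ts)
  let ?R = "E \<inter> (S - {v}) \<times> (S - {v})"
  have symR: "sym (?R\<^sup>*)" using symE by (intro sym_rtrancl) (auto simp: sym_def)
  have len: "length Cs = length ts" using 1(4) list_all2_lengthD by blast
  have nth: "\<And>i. i < length ts \<Longrightarrow> is_dtree E (Cs!i) (ts!i) \<and> wft (ts!i)"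
    using 1(4) by (auto simp: list_all2_conv_all_nth)
  have lab: "\<And>i. i < length ts \<Longrightarrow> rlabels (ts!i) = Cs!i" using nth rlabels_dtree by blast
  have A: "\<forall>t\<in>set ts. v \<notin> rlabels t \<and> wft t"
  proof
    fix t assume "t \<in> set ts"
    then obtain i where i: "i < length ts" "t = ts!i" by (metis in_set_conv_nth)
    have "Cs!i \<in> comps_minus E S v" using 1(3) len i by (metis nth_mem)
    then have "v \<notin> Cs!i" unfolding comps_minus_def by auto
    then show "v \<notin> rlabels t \<and> wft t" using i lab nth by auto
  qed
  have B: "\<forall>t\<in>set ts. \<forall>t'\<in>set ts. t \<noteq> t' \<longrightarrow> rlabels t \<inter> rlabels t' = {}"
  proof (intro ballI impI)
    fix t t' assume tt: "t \<in> set ts" "t' \<in> set ts" "t \<noteq> t'"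
    then obtain i j where i: "i < length ts" "t = ts!i" "j < length ts" "t' = ts!j"
      by (metis in_set_conv_nth)
    then have "i \<noteq> j" using tt by auto
    then have ne: "Cs!i \<noteq> Cs!j" using 1(2) len i by (simp add: nth_eq_iff_index_eq)
    have ci: "Cs!i \<in> comps_minus E S v" "Cs!j \<in> comps_minus E S v" using 1(3) len i by (metis nth_mem)+
    show "rlabels t \<inter> rlabels t' = {}"
    proof (rule ccontr)
      assume "rlabels t \<inter> rlabels t' \<noteq> {}"
      then obtain z where z: "z \<in> Cs!i" "z \<in> Cs!j" using i lab by auto
      obtain x where x: "Cs!i = {y \<in> S - {v}. (x, y) \<in> ?R\<^sup>*}" using ci(1) unfolding comps_minus_def by auto
      obtain x' where x': "Cs!j = {y \<in> S - {v}. (x', y) \<in> ?R\<^sup>*}" using ci(2) unfolding comps_minus_def by auto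
      have "(x,z) \<in> ?R\<^sup>*" "(x',z) \<in> ?R\<^sup>*" using z x x' by auto
      then have "(x,x') \<in> ?R\<^sup>*" "(x',x) \<in> ?R\<^sup>*" using symR by (meson rtrancl_trans symD)+
      then have "Cs!i = Cs!j" unfolding x x' by (auto intro: rtrancl_trans)
      then show False using ne by simp
    qed
  qed
  show ?case using A B by simp
qed



lemma chain_lemma:
  assumes symE: "sym E" and Une: "U \<noteq> {}" and Uc: "connected_on E U"
  shows "is_dtree E S D' \<Longrightarrow> U \<subseteq> S \<Longrightarrow> q1 \<in> rlabels D' \<Longrightarrow> q2 \<in> rlabels D' \<Longrightarrow>
    (\<exists>u\<in>U. (u,q1)\<in>E) \<Longrightarrow> (\<exists>u\<in>U. (u,q2)\<in>E) \<Longrightarrow>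
    (\<forall>a. (a,q1) \<in> (dedges D')\<^sup>+ \<longrightarrow> a \<notin> U) \<Longrightarrow>
    (q1,q2) \<in> (dedges D')\<^sup>* \<or> (q2,q1) \<in> (dedges D')\<^sup>*"
proof (induction arbitrary: q1 q2 rule: is_dtree.induct)
  case (1 v S Cs ts)
  let ?D = "Node v ts"
  let ?R = "E \<inter> (S - {v}) \<times> (S - {v})"
  have labS: "rlabels ?D = S" using rlabels_dtree[OF is_dtree.intros[OF 1(1-3)]] 1(4)
    by (metis (no_types, lifting) list.rel_mono_strong)
  show ?case
  proof (cases "q1 = v \<or> q2 = v")
    case True
    then show ?thesis using root_anc[of q1 ?D] root_anc[of q2 ?D] 1 by auto
  next
    case False
    then have q1v: "q1 \<noteq> v" and q2v: "q2 \<noteq> v" by auto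
    have "(root ?D,q1) \<in> (dedges ?D)\<^sup>*" using root_anc[of q1 ?D] "1.prems"(2) by blast
    then have "(v,q1) \<in> (dedges ?D)\<^sup>+" using q1v by (simp add: rtrancl_eq_or_trancl)
    then have vU: "v \<notin> U" using "1.prems"(6) by blast
    have q1S: "q1 \<in> S - {v}" and q2S: "q2 \<in> S - {v}" using labS 1 q1v q2v by auto
    have US: "U \<subseteq> S - {v}" using vU "1.prems"(1) by auto
    have ER: "(E \<inter> U \<times> U)\<^sup>* \<subseteq> ?R\<^sup>*" using US by (intro rtrancl_mono) auto
    obtain u1 where u1: "u1 \<in> U" "(u1,q1) \<in> E" using "1.prems"(4) by blast
    obtain u2 where u2: "u2 \<in> U" "(u2,q2) \<in> E" using "1.prems"(5) by blast
    have q1u1: "(q1,u1) \<in> ?R" using u1 symE q1S US by (auto simp: sym_def)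
    have toU: "\<And>u. u \<in> U \<Longrightarrow> (q1,u) \<in> ?R\<^sup>*"
    proof -
      fix u assume "u \<in> U"
      then have "(u1,u) \<in> (E \<inter> U \<times> U)\<^sup>*" using Uc u1 unfolding connected_on_def by blast
      then have "(u1,u) \<in> ?R\<^sup>*" using ER by blast
      then show "(q1,u) \<in> ?R\<^sup>*" using q1u1 by (meson converse_rtrancl_into_rtrancl)
    qed
    let ?C = "{y \<in> S - {v}. (q1, y) \<in> ?R\<^sup>*}"
    have "?C \<in> comps_minus E S v" unfolding comps_minus_def using q1S by (rule imageI)
    then have Cin: "?C \<in> set Cs" using 1(3) by simp
    then obtain i where i: "i < length Cs" "Cs!i = ?C" unfolding in_set_conv_nth by blast
    have len: "length Cs = length ts" using 1(4) list_all2_lengthD by blast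
    have dt: "is_dtree E ?C (ts!i)" and IH: "\<And>q1 q2. ?C \<subseteq> ?C \<Longrightarrow> U \<subseteq> ?C \<Longrightarrow> q1 \<in> rlabels (ts!i) \<Longrightarrow> q2 \<in> rlabels (ts!i) \<Longrightarrow>
    (\<exists>u\<in>U. (u,q1)\<in>E) \<Longrightarrow> (\<exists>u\<in>U. (u,q2)\<in>E) \<Longrightarrow>
    (\<forall>a. (a,q1) \<in> (dedges (ts!i))\<^sup>+ \<longrightarrow> a \<notin> U) \<Longrightarrow>
    (q1,q2) \<in> (dedges (ts!i))\<^sup>* \<or> (q2,q1) \<in> (dedges (ts!i))\<^sup>*"
      using 1(4) i by (auto simp: list_all2_conv_all_nth)
    have lab: "rlabels (ts!i) = ?C" using rlabels_dtree[OF dt] .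
    have UC: "U \<subseteq> ?C" using US toU by auto
    have q2C: "q2 \<in> ?C"
    proof -
      have "(u2,q2) \<in> ?R" using u2 q2S US by auto
      then have "(q1,q2) \<in> ?R\<^sup>*" using toU[OF u2(1)] by (meson rtrancl.rtrancl_into_rtrancl)
      then show ?thesis using q2S by blast
    qed
    have q1C: "q1 \<in> ?C" using q1S by auto
    have sub: "dedges (ts!i) \<subseteq> dedges ?D" using i len by (auto intro!: exI[of _ "ts!i"])
    have anc: "\<forall>a. (a,q1) \<in> (dedges (ts!i))\<^sup>+ \<longrightarrow> a \<notin> U"
      using "1.prems"(6) trancl_mono sub by blast
    have "(q1,q2) \<in> (dedges (ts!i))\<^sup>* \<or> (q2,q1) \<in> (dedges (ts!i))\<^sup>*"
      using IH[OF _ UC, of q1 q2] lab q1C q2C "1.prems"(4,5) anc by auto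
    then show ?thesis using rtrancl_mono[OF sub] by blast
  qed
qed

lemma partial_anc: "is_partial_dtree_of D P \<Longrightarrow> (a,q) \<in> (dedges D)\<^sup>+ \<Longrightarrow> q \<in> P \<Longrightarrow> a \<in> P"
proof -
  assume pd: "is_partial_dtree_of D P"
  have "(a,q) \<in> (dedges D)\<^sup>+ \<Longrightarrow> q \<in> P \<longrightarrow> a \<in> P"
  proof (induction q rule: trancl_induct)
    case (base y) then show ?case using pd unfolding is_partial_dtree_of_def by blast
  next
    case (step y z) then show ?case using pd unfolding is_partial_dtree_of_def by blast
  qed
  then show "(a,q) \<in> (dedges D)\<^sup>+ \<Longrightarrow> q \<in> P \<Longrightarrow> a \<in> P" by blast
qed

lemma chain_top:
  assumes "finite Q" "Q \<noteq> {}" "\<forall>x\<in>Q. \<forall>y\<in>Q. (x,y)\<in>r\<^sup>* \<or> (y,x)\<in>r\<^sup>*"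
  shows "\<exists>a\<in>Q. \<forall>q\<in>Q. (a,q)\<in>r\<^sup>*"
  using assms
proof (induction Q rule: finite_ne_induct)
  case (singleton x) then show ?case by auto
next
  case (insert x F)
  then obtain a where a: "a \<in> F" "\<forall>q\<in>F. (a,q)\<in>r\<^sup>*" by auto
  show ?case
  proof (cases "(x,a) \<in> r\<^sup>*")
    case True then show ?thesis using a by (auto intro: rtrancl_trans)
  next
    case False then have "(a,x) \<in> r\<^sup>*" using insert.prems a by auto
    then show ?thesis using a by auto
  qed
qed

lemma chain_bot:
  assumes "finite Q" "Q \<noteq> {}" "\<forall>x\<in>Q. \<forall>y\<in>Q. (x,y)\<in>r\<^sup>* \<or> (y,x)\<in>r\<^sup>*"
  shows "\<exists>b\<in>Q. \<forall>q\<in>Q. (q,b)\<in>r\<^sup>*"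
  using assms
proof (induction Q rule: finite_ne_induct)
  case (singleton x) then show ?case by auto
next
  case (insert x F)
  then obtain a where a: "a \<in> F" "\<forall>q\<in>F. (q,a)\<in>r\<^sup>*" by auto
  show ?case
  proof (cases "(a,x) \<in> r\<^sup>*")
    case True then show ?thesis using a by (auto intro: rtrancl_trans)
  next
    case False then have "(x,a) \<in> r\<^sup>*" using insert.prems a by auto
    then show ?thesis using a by auto
  qed
qed



theorem mainTheorem3:
  fixes V :: "'a set" and E :: "('a \<times> 'a) set" and U :: "'a set"
    and D :: "'a rtree" and P :: "'a set"
  assumes "is_tree V E"
    and "is_subtree_vset V E U"
    and "is_dtree E V D"
    and "is_partial_dtree_of D P"
    and "P \<inter> U = {}"
    and "P \<inter> nbhd V E U \<noteq> {}"
  shows "is_path_on (uedges D) (dspan D (P \<inter> nbhd V E U))"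
proof -
  let ?Q = "P \<inter> nbhd V E U"
  let ?r = "dedges D"
  have finV: "finite V" and symE: "sym E" using assms(1) unfolding is_tree_def by auto
  have wf: "wft D" using dtree_wft[OF symE assms(3)] .
  have up: "\<And>a a' b. (a,b)\<in>?r \<Longrightarrow> (a',b)\<in>?r \<Longrightarrow> a=a'" using unique_parent[OF wf] by blast
  have acyc: "\<And>x. (x,x) \<notin> ?r\<^sup>+" using acyclic_wft[OF wf] .
  have Psub: "P \<subseteq> rlabels D" using assms(4) unfolding is_partial_dtree_of_def by blast
  have UV: "U \<subseteq> V" and Une: "U \<noteq> {}" and Uc: "connected_on E U"
    using assms(2) unfolding is_subtree_vset_def by auto
  have Qfin: "finite ?Q" using finV by (rule finite_subset[rotated]) (auto simp: nbhd_def)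
  have chain: "\<forall>x\<in>?Q. \<forall>y\<in>?Q. (x,y)\<in>?r\<^sup>* \<or> (y,x)\<in>?r\<^sup>*"
  proof (intro ballI)
    fix q1 q2 assume q: "q1 \<in> ?Q" "q2 \<in> ?Q"
    have e1: "\<exists>u\<in>U. (u,q1)\<in>E" and e2: "\<exists>u\<in>U. (u,q2)\<in>E" using q unfolding nbhd_def by auto
    have anc: "\<forall>a. (a,q1) \<in> ?r\<^sup>+ \<longrightarrow> a \<notin> U"
      using partial_anc[OF assms(4)] q(1) assms(5) by blast
    show "(q1,q2)\<in>?r\<^sup>* \<or> (q2,q1)\<in>?r\<^sup>*"
      using chain_lemma[OF symE Une Uc assms(3) UV _ _ e1 e2 anc] q Psub by blast
  qed
  obtain a where a: "a \<in> ?Q" "\<forall>q\<in>?Q. (a,q)\<in>?r\<^sup>*" using chain_top[OF Qfin assms(6) chain] by blast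
  obtain b where b: "b \<in> ?Q" "\<forall>q\<in>?Q. (q,b)\<in>?r\<^sup>*" using chain_bot[OF Qfin assms(6) chain] by blast
  have ab: "(a,b) \<in> ?r\<^sup>*" using a b by blast
  define X0 where "X0 = {z. (a,z)\<in>?r\<^sup>* \<and> (z,b)\<in>?r\<^sup>*}"
  obtain xs where xs: "distinct xs" "set xs = X0" "\<forall>i. i+1 < length xs \<longrightarrow> (xs!i, xs!(i+1)) \<in> ?r"
    using path_exists[of ?r a b, OF _ acyc ab] up unfolding X0_def by blast
  have alab: "a \<in> rlabels D" using a Psub by blast
  have X0lab: "X0 \<subseteq> rlabels D"
  proof
    fix z assume "z \<in> X0"
    then have "(a,z) \<in> ?r\<^sup>*" unfolding X0_def by blast
    then have "z = a \<or> (a,z) \<in> ?r\<^sup>+" by (auto simp: rtrancl_eq_or_trancl)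
    then show "z \<in> rlabels D" using alab trancl_sub[of a z D] by blast
  qed
  have QX0: "?Q \<subseteq> X0" using a b unfolding X0_def by blast
  have X0conn: "connected_on (uedges D) X0"
    unfolding connected_on_def
  proof (intro ballI)
    fix x y assume xy: "x \<in> X0" "y \<in> X0"
    have xb: "(x,b) \<in> ?r\<^sup>*" and yb: "(y,b) \<in> ?r\<^sup>*" and ax: "(a,x) \<in> ?r\<^sup>*" and ay: "(a,y) \<in> ?r\<^sup>*"
      using xy unfolding X0_def by auto
    have sub1: "?r \<inter> X0 \<times> X0 \<subseteq> uedges D \<inter> X0 \<times> X0" unfolding uedges_def by blast
    have sub2: "(?r \<inter> X0 \<times> X0)\<inverse> \<subseteq> uedges D \<inter> X0 \<times> X0" unfolding uedges_def by blast
    have "(x,y) \<in> ?r\<^sup>* \<or> (y,x) \<in> ?r\<^sup>*" using anc_comparable[of ?r x b y, OF _ xb yb] up by blast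
    then
    show "(x, y) \<in> (uedges D \<inter> X0 \<times> X0)\<^sup>*"
    proof
      assume "(x,y) \<in> ?r\<^sup>*"
      then have "(x,y) \<in> (?r \<inter> X0 \<times> X0)\<^sup>*" using seg_conn[OF _ ax yb] unfolding X0_def by blast
      then show ?thesis using rtrancl_mono[OF sub1] by blast
    next
      assume "(y,x) \<in> ?r\<^sup>*"
      then have "(y,x) \<in> (?r \<inter> X0 \<times> X0)\<^sup>*" using seg_conn[OF _ ay xb] unfolding X0_def by blast
      then have "(x,y) \<in> ((?r \<inter> X0 \<times> X0)\<inverse>)\<^sup>*" by (simp add: rtrancl_converse)
      then show ?thesis using rtrancl_mono[OF sub2] by blast
    qed
  qed
  have span: "dspan D ?Q = X0"
    unfolding dspan_def
  proof (rule equalityI)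
    show "\<Inter> {X. ?Q \<subseteq> X \<and> X \<subseteq> rlabels D \<and> connected_on (uedges D) X} \<subseteq> X0"
      using QX0 X0lab X0conn by (intro Inter_lower) blast
  next
    show "X0 \<subseteq> \<Inter> {X. ?Q \<subseteq> X \<and> X \<subseteq> rlabels D \<and> connected_on (uedges D) X}"
    proof (rule Inter_greatest, safe)
      fix X z assume X: "?Q \<subseteq> X" "X \<subseteq> rlabels D" "connected_on (uedges D) X" and z: "z \<in> X0"
      show "z \<in> X"
      proof (cases "z = a")
        case True then show ?thesis using X a by blast
      next
        case False
        have az: "(a,z) \<in> ?r\<^sup>*" and zb: "(z,b) \<in> ?r\<^sup>*" using z unfolding X0_def by auto
        have "a \<in> X" "b \<in> X" using X a b by blast+
        then have ba: "(b,a) \<in> (uedges D \<inter> X \<times> X)\<^sup>*" using X(3) unfolding connected_on_def by blast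
        let ?S = "{w. (z,w) \<in> ?r\<^sup>*}"
        have bS: "b \<in> ?S" using zb by simp
        have aS: "a \<notin> ?S"
        proof
          assume "a \<in> ?S"
          then have za: "(z,a) \<in> ?r\<^sup>*" by simp
          have "(a,z) \<in> ?r\<^sup>+" using az False by (auto simp: rtrancl_eq_or_trancl)
          then have "(a,a) \<in> ?r\<^sup>+" using za by (rule trancl_rtrancl_trancl)
          then show False using acyc by blast
        qed
        obtain x y where e: "(x,y) \<in> uedges D \<inter> X \<times> X" "x \<in> ?S" "y \<notin> ?S"
          using cross_edge[OF ba bS aS] by blast
        have "(x,y) \<in> ?r \<or> (y,x) \<in> ?r" using e(1) unfolding uedges_def by blast
        then show ?thesis
        proof
          assume "(x,y) \<in> ?r"
          then have "y \<in> ?S" using e(2) by (simp add: rtrancl.rtrancl_into_rtrancl)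
          then show ?thesis using e(3) by blast
        next
          assume yx: "(y,x) \<in> ?r"
          show ?thesis
          proof (cases "x = z")
            case True then show ?thesis using e(1) by blast
          next
            case False
            then have "(z,x) \<in> ?r\<^sup>+" using e(2) by (simp add: rtrancl_eq_or_trancl)
            then obtain p where "(z,p) \<in> ?r\<^sup>*" "(p,x) \<in> ?r" by (meson tranclD2)
            then have "p = y" using up yx by blast
            then show ?thesis using e(3) \<open>(z,p) \<in> ?r\<^sup>*\<close> by simp
          qed
        qed
      qed
    qed
  qed
  show ?thesis
    unfolding is_path_on_def span
    using xs unfolding uedges_def by blast
qed

end
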